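(* Let $\mathcal{C}\subseteq(\mathbb{C}^a)^{\otimes n}$ be a quantum code of block length $n$ and dimension $k>0$. Suppose that for some $i\in[n]$ there exist subsets $I_i^1,I_i^2\subseteq[n]$ with $I_i^1\cap I_i^2=\{i\}$ such that for each $b\in\{1,2\}$ there is a quantum channel $\mathrm{Rec}_i^b:\mathcal{M}(I_i^b\setminus\{i\})\to\mathcal{M}(I_i^b)$ with \[ (\mathrm{Rec}_i^b\otimes \mathrm{id}_{[n]\setminus I_i^b})(\psi_{[n]\setminus\{i\}})=\psi \] for every code state $\psi\in\mathcal{C}$. Then there exists a single-qudit density matrix $\alpha$ such that every code state $\psi\in\mathcal{C}$ decomposes as $\psi=\alpha_i\otimes\psi_{[n]\setminus\{i\}}$ (with $\alpha$ on qudit $i$).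
   Context: $[n]=\{0,\dots,n-1\}$. A quantum code of block length $n$, local dimension $a$, dimension $k$ is an $a^k$-dimensional linear subspace of $(\mathbb{C}^a)^{\otimes n}$; code states are the density matrices $\psi=|\psi\rangle\langle\psi|$ of unit vectors $|\psi\rangle$ in it. $\mathcal{M}(A)$ is the set of density matrices on the qudits $A$, and $\psi_B$ is the reduced density matrix of $\psi$ on qudits $B$. *)

theory Defs
  imports Complex_Main
begin

text \<open>A basis configuration of the qudits in a set A
  (local dimension a) is a function x with x j < a for j in A and x j = 0 outside A.
  Vectors are functions from configurations to complex numbers, operators on the qudits A
  are kernels (matrices) indexed by pairs of configurations; only entries at configurations
  of A are meaningful.\<close>

type_synonym cfg = "nat \<Rightarrow> nat"
type_synonym qvec = "cfg \<Rightarrow> complex"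
type_synonym qop = "cfg \<Rightarrow> cfg \<Rightarrow> complex"

definition cfgs :: "nat \<Rightarrow> nat set \<Rightarrow> cfg set" where
  "cfgs a A = {x. (\<forall>j\<in>A. x j < a) \<and> (\<forall>j. j \<notin> A \<longrightarrow> x j = 0)}"

definition restr :: "nat set \<Rightarrow> cfg \<Rightarrow> cfg" where
  "restr A x = (\<lambda>j. if j \<in> A then x j else 0)"

definition join :: "nat set \<Rightarrow> cfg \<Rightarrow> cfg \<Rightarrow> cfg" where
  "join A u w = (\<lambda>j. if j \<in> A then u j else w j)"

definition density :: "nat \<Rightarrow> nat set \<Rightarrow> qop \<Rightarrow> bool" where
  "density a A \<rho> \<longleftrightarrow>
     (\<forall>v::qvec. let q = (\<Sum>x\<in>cfgs a A. \<Sum>y\<in>cfgs a A. cnj (v x) * \<rho> x y * v y)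
                in Im q = 0 \<and> Re q \<ge> 0)
     \<and> (\<Sum>x\<in>cfgs a A. \<rho> x x) = 1"

definition ptrace :: "nat \<Rightarrow> nat set \<Rightarrow> nat set \<Rightarrow> qop \<Rightarrow> qop" where
  "ptrace a A B \<rho> = (\<lambda>x y. \<Sum>z\<in>cfgs a (A - B). \<rho> (join B x z) (join B y z))"

definition reduced :: "nat \<Rightarrow> nat \<Rightarrow> nat set \<Rightarrow> qop \<Rightarrow> qop" where
  "reduced a n B \<rho> = ptrace a {..<n} B \<rho>"

definition tensor :: "nat set \<Rightarrow> nat set \<Rightarrow> qop \<Rightarrow> qop \<Rightarrow> qop" where
  "tensor A B \<sigma> \<tau> = (\<lambda>x y. \<sigma> (restr A x) (restr A y) * \<tau> (restr B x) (restr B y))"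

text \<open>Quantum channels M(S) \<rightarrow> M(T), in operator-sum (Kraus) form: a finite family of
  operators K : C^{cfgs S} \<rightarrow> C^{cfgs T} with \<Sum> K^\<dagger> K = id, and the channel acts as
  \<rho> \<mapsto> \<Sum> K \<rho> K^\<dagger>.\<close>
definition kraus_apply :: "nat \<Rightarrow> nat set \<Rightarrow> qop list \<Rightarrow> qop \<Rightarrow> qop" where
  "kraus_apply a S Ks \<rho> = (\<lambda>x y. \<Sum>K\<leftarrow>Ks. \<Sum>u\<in>cfgs a S. \<Sum>v\<in>cfgs a S.
        K x u * \<rho> u v * cnj (K y v))"

definition kraus_family :: "nat \<Rightarrow> nat set \<Rightarrow> nat set \<Rightarrow> qop list \<Rightarrow> bool" where
  "kraus_family a S T Ks \<longleftrightarrow>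
     (\<forall>u\<in>cfgs a S. \<forall>v\<in>cfgs a S.
        (\<Sum>K\<leftarrow>Ks. \<Sum>t\<in>cfgs a T. cnj (K t u) * K t v) = (if u = v then 1 else 0))"

definition quantum_channel :: "nat \<Rightarrow> nat set \<Rightarrow> nat set \<Rightarrow> (qop \<Rightarrow> qop) \<Rightarrow> bool" where
  "quantum_channel a S T \<Phi> \<longleftrightarrow>
     (\<exists>Ks. kraus_family a S T Ks \<and> (\<forall>\<rho>. \<Phi> \<rho> = kraus_apply a S Ks \<rho>))"

text \<open>(\<Phi> \<otimes> id_R) for a channel \<Phi> : M(S) \<rightarrow> M(T), applied to an operator on S \<union> R
  (R disjoint from S and T); defined by linear extension on matrix units of R.\<close>
definition channel_tensor_id :: "nat set \<Rightarrow> nat set \<Rightarrow> nat set \<Rightarrow> (qop \<Rightarrow> qop) \<Rightarrow> qop \<Rightarrow> qop" where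
  "channel_tensor_id S T R \<Phi> \<rho> =
     (\<lambda>x y. \<Phi> (\<lambda>u v. \<rho> (join S u (restr R x)) (join S v (restr R y))) (restr T x) (restr T y))"

definition is_subspace :: "nat \<Rightarrow> nat \<Rightarrow> qvec set \<Rightarrow> bool" where
  "is_subspace a n C \<longleftrightarrow>
     (\<forall>v\<in>C. \<forall>x. x \<notin> cfgs a {..<n} \<longrightarrow> v x = 0) \<and> (\<lambda>_. 0) \<in> C \<and>
     (\<forall>u\<in>C. \<forall>v\<in>C. (\<lambda>x. u x + v x) \<in> C) \<and> (\<forall>c. \<forall>v\<in>C. (\<lambda>x. c * v x) \<in> C)"

definition has_dim :: "qvec set \<Rightarrow> nat \<Rightarrow> bool" where
  "has_dim C d \<longleftrightarrow> (\<exists>B. finite B \<and> card B = d \<and> B \<subseteq> C \<and>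
     (\<forall>f. (\<lambda>x. \<Sum>b\<in>B. f b * b x) = (\<lambda>_. 0) \<longrightarrow> (\<forall>b\<in>B. f b = 0)) \<and>
     (\<forall>v\<in>C. \<exists>f. v = (\<lambda>x. \<Sum>b\<in>B. f b * b x)))"

definition quantum_code :: "nat \<Rightarrow> nat \<Rightarrow> nat \<Rightarrow> qvec set \<Rightarrow> bool" where
  "quantum_code a n k C \<longleftrightarrow> is_subspace a n C \<and> has_dim C (a ^ k)"

definition outer :: "qvec \<Rightarrow> qop" where
  "outer v = (\<lambda>x y. v x * cnj (v y))"

definition code_states :: "nat \<Rightarrow> nat \<Rightarrow> qvec set \<Rightarrow> qop set" where
  "code_states a n C = {outer v | v. v \<in> C \<and> (\<Sum>x\<in>cfgs a {..<n}. cmod (v x) ^ 2) = 1}"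

end

theory Submission
  imports Defs
begin


definition ecfg :: "nat \<Rightarrow> nat \<Rightarrow> cfg" where
  "ecfg i w = (\<lambda>j. if j = i then w else 0)"

lemma cfgs_single: "cfgs a {i} = ecfg i ` {..<a}"
proof
  show "cfgs a {i} \<subseteq> ecfg i ` {..<a}"
  proof
    fix z assume z: "z \<in> cfgs a {i}"
    then have "z = ecfg i (z i)" unfolding cfgs_def ecfg_def by auto
    moreover have "z i < a" using z unfolding cfgs_def by auto
    ultimately show "z \<in> ecfg i ` {..<a}" by blast
  qed
  show "ecfg i ` {..<a} \<subseteq> cfgs a {i}" unfolding cfgs_def ecfg_def by auto
qed

lemma inj_ecfg: "inj (ecfg i)"
  by (rule injI) (metis ecfg_def)

lemma sum_cfgs_single: "(\<Sum>z\<in>cfgs a {i}. f z) = (\<Sum>w<a. f (ecfg i w))"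
  unfolding cfgs_single by (simp add: sum.reindex inj_on_subset[OF inj_ecfg])

lemma cfgs_insert: "j \<notin> A \<Longrightarrow> cfgs a (insert j A) = (\<lambda>(w,x). x(j:=w)) ` ({..<a} \<times> cfgs a A)"
proof (intro equalityI subsetI)
  fix y assume jA: "j \<notin> A" and y: "y \<in> cfgs a (insert j A)"
  have "y = (\<lambda>(w,x). x(j:=w)) (y j, y(j:=0))" by simp
  moreover have "(y j, y(j:=0)) \<in> {..<a} \<times> cfgs a A" using y jA unfolding cfgs_def by auto
  ultimately show "y \<in> (\<lambda>(w,x). x(j:=w)) ` ({..<a} \<times> cfgs a A)" by blast
next
  fix y assume jA: "j \<notin> A" and y: "y \<in> (\<lambda>(w,x). x(j:=w)) ` ({..<a} \<times> cfgs a A)"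
  then show "y \<in> cfgs a (insert j A)" unfolding cfgs_def by auto
qed

lemma finite_cfgs: "finite A \<Longrightarrow> finite (cfgs a A)"
proof (induction A rule: finite_induct)
  case empty
  have "cfgs a {} = {\<lambda>_. 0}" unfolding cfgs_def by auto
  then show ?case by simp
next
  case (insert j A)
  then show ?case by (simp add: cfgs_insert)
qed



definition Jf :: "nat set \<Rightarrow> nat set \<Rightarrow> nat \<Rightarrow> cfg \<Rightarrow> cfg \<Rightarrow> nat \<Rightarrow> cfg" where
  "Jf S R i u x w = (\<lambda>j. if j \<in> S then u j else if j \<in> R then x j else if j = i then w else 0)"

definition Qf :: "nat \<Rightarrow> nat set \<Rightarrow> nat set \<Rightarrow> nat set \<Rightarrow> nat \<Rightarrow> qop \<Rightarrow> nat \<Rightarrow> qvec \<Rightarrow> qvec" where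
  "Qf a S T R i K w v x = (\<Sum>u\<in>cfgs a S. K (restr T x) u * v (Jf S R i u x w))"

lemma join_Jf:
  assumes "i \<in> T" "T \<subseteq> {..<n}"
  shows "join ({..<n} - {i}) (join (T - {i}) u (restr ({..<n} - T) x)) (ecfg i w)
       = Jf (T - {i}) ({..<n} - T) i u x w"
  using assms unfolding join_def restr_def ecfg_def Jf_def by (auto simp: fun_eq_iff)

lemma step1:
  assumes "i < n" "i \<in> T" "T \<subseteq> {..<n}"
  shows "channel_tensor_id (T - {i}) T ({..<n} - T) (kraus_apply a (T - {i}) Ks)
           (reduced a n ({..<n} - {i}) (outer v)) x y =
         (\<Sum>j<length Ks. \<Sum>w<a. Qf a (T - {i}) T ({..<n} - T) i (Ks!j) w v x *
              cnj (Qf a (T - {i}) T ({..<n} - T) i (Ks!j) w v y))"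
proof -
  have D: "{..<n} - ({..<n} - {i}) = {i}" using assms by auto
  let ?S = "T - {i}" and ?R = "{..<n} - T"
  have "channel_tensor_id ?S T ?R (kraus_apply a ?S Ks) (reduced a n ({..<n} - {i}) (outer v)) x y
     = (\<Sum>K\<leftarrow>Ks. \<Sum>u\<in>cfgs a ?S. \<Sum>u'\<in>cfgs a ?S. K (restr T x) u *
          (\<Sum>w<a. v (Jf ?S ?R i u x w) * cnj (v (Jf ?S ?R i u' y w))) * cnj (K (restr T y) u'))"
    unfolding channel_tensor_id_def kraus_apply_def reduced_def ptrace_def outer_def D sum_cfgs_single
    using join_Jf[OF assms(2,3)] by simp
  also have "\<dots> = (\<Sum>K\<leftarrow>Ks. \<Sum>w<a. (\<Sum>u\<in>cfgs a ?S. K (restr T x) u * v (Jf ?S ?R i u x w)) *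
          cnj (\<Sum>u'\<in>cfgs a ?S. K (restr T y) u' * v (Jf ?S ?R i u' y w)))"
  proof -
    have "(\<Sum>u\<in>cfgs a ?S. \<Sum>u'\<in>cfgs a ?S. K (restr T x) u *
          (\<Sum>w<a. v (Jf ?S ?R i u x w) * cnj (v (Jf ?S ?R i u' y w))) * cnj (K (restr T y) u'))
       = (\<Sum>w<a. (\<Sum>u\<in>cfgs a ?S. K (restr T x) u * v (Jf ?S ?R i u x w)) *
          cnj (\<Sum>u'\<in>cfgs a ?S. K (restr T y) u' * v (Jf ?S ?R i u' y w)))" for K
      apply (simp add: sum_distrib_left sum_distrib_right sum.swap[of _ "{..<a}"] mult_ac)
      apply (rule sum.cong[OF refl])
      apply (rule sum.swap)
      done
    then show ?thesis by simp
  qed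
  finally show ?thesis unfolding Qf_def by (simp add: sum_list_sum_nth atLeast0LessThan)
qed


lemma rank_one:
  fixes V :: "nat \<Rightarrow> nat \<Rightarrow> cfg \<Rightarrow> complex" and v :: qvec
  assumes H: "\<And>x y. x \<in> X \<Longrightarrow> y \<in> X \<Longrightarrow> (\<Sum>j<m. \<Sum>w<a. V j w x * cnj (V j w y)) = v x * cnj (v y)"
    and x0: "x0 \<in> X" and x: "x \<in> X" and j: "j < m" and w: "w < a"
  shows "V j w x * v x0 = V j w x0 * v x"
proof -
  define D where "D j w = V j w x * v x0 - V j w x0 * v x" for j w
  have e: "D j w * cnj (D j w) =
      (V j w x * cnj (V j w x)) * (v x0 * cnj (v x0)) - (V j w x * cnj (V j w x0)) * (v x0 * cnj (v x))
    - (V j w x0 * cnj (V j w x)) * (v x * cnj (v x0)) + (V j w x0 * cnj (V j w x0)) * (v x * cnj (v x))" for j w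
    unfolding D_def by (simp add: algebra_simps)
  have "(\<Sum>j<m. \<Sum>w<a. D j w * cnj (D j w)) =
      (\<Sum>j<m. \<Sum>w<a. V j w x * cnj (V j w x)) * (v x0 * cnj (v x0))
    - (\<Sum>j<m. \<Sum>w<a. V j w x * cnj (V j w x0)) * (v x0 * cnj (v x))
    - (\<Sum>j<m. \<Sum>w<a. V j w x0 * cnj (V j w x)) * (v x * cnj (v x0))
    + (\<Sum>j<m. \<Sum>w<a. V j w x0 * cnj (V j w x0)) * (v x * cnj (v x))"
    unfolding e by (simp add: sum.distrib sum_subtractf sum_distrib_right)
  also have "\<dots> = 0" using H[OF x x] H[OF x x0] H[OF x0 x] H[OF x0 x0] by (simp add: algebra_simps)
  finally have "(\<Sum>j<m. \<Sum>w<a. D j w * cnj (D j w)) = 0" .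
  then have "complex_of_real (\<Sum>j<m. \<Sum>w<a. (cmod (D j w))\<^sup>2) = 0"
    by (simp only: of_real_sum complex_norm_square)
  then have "(\<Sum>j<m. \<Sum>w<a. (cmod (D j w))\<^sup>2) = 0" using of_real_eq_0_iff by blast
  then have "\<forall>j\<in>{..<m}. (\<Sum>w<a. (cmod (D j w))\<^sup>2) = 0"
    by (subst (asm) sum_nonneg_eq_0_iff) (auto intro: sum_nonneg)
  then have "(\<Sum>w<a. (cmod (D j w))\<^sup>2) = 0" using j by auto
  then have "(cmod (D j w))\<^sup>2 = 0" using w by (subst (asm) sum_nonneg_eq_0_iff) auto
  then show ?thesis unfolding D_def by simp
qed



lemma eig_const:
  fixes Q :: "qvec \<Rightarrow> qvec" and C :: "qvec set"
  assumes add: "\<forall>u\<in>C. \<forall>w\<in>C. (\<lambda>x. u x + w x) \<in> C"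
    and Qadd: "\<And>u w x. x \<in> X \<Longrightarrow> Q (\<lambda>x. u x + w x) x = Q u x + Q w x"
    and Qsmul: "\<And>t u x. x \<in> X \<Longrightarrow> Q (\<lambda>x. t * u x) x = t * Q u x"
    and Qloc: "\<And>u w x. \<forall>y\<in>X. u y = w y \<Longrightarrow> x \<in> X \<Longrightarrow> Q u x = Q w x"
    and eig: "\<And>u. u \<in> C \<Longrightarrow> \<exists>c. \<forall>x\<in>X. Q u x = c * u x"
    and vz: "vz \<in> C" "xz \<in> X" "vz xz \<noteq> 0"
  shows "\<exists>c. \<forall>u\<in>C. \<forall>x\<in>X. Q u x = c * u x"
proof -
  obtain cz where cz: "\<forall>x\<in>X. Q vz x = cz * vz x" using eig[OF vz(1)] by blast
  have "\<forall>x\<in>X. Q u x = cz * u x" if u: "u \<in> C" for u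
  proof -
    obtain cu where cu: "\<forall>x\<in>X. Q u x = cu * u x" using eig[OF u] by blast
    have uv: "(\<lambda>x. u x + vz x) \<in> C" using add u vz(1) by blast
    obtain cs where cs: "\<forall>x\<in>X. Q (\<lambda>x. u x + vz x) x = cs * (u x + vz x)" using eig[OF uv] by blast
    have E: "(cs - cu) * u x = (cz - cs) * vz x" if "x \<in> X" for x
      using cs cu cz Qadd[OF that, of u vz] that by (auto simp: algebra_simps)
    show ?thesis
    proof (cases "cs = cu")
      case True
      then have "cz = cs" using E[OF vz(2)] vz(3) by simp
      then show ?thesis using cu True by simp
    next
      case False
      define t where "t = (cz - cs) / (cs - cu)"
      have ut: "\<forall>y\<in>X. u y = t * vz y" using E False unfolding t_def by (auto simp: field_simps)
      show ?thesis
      proof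
        fix x assume x: "x \<in> X"
        have "Q u x = Q (\<lambda>y. t * vz y) x" using Qloc[OF ut x] .
        also have "\<dots> = t * (cz * vz x)" using Qsmul[OF x] cz x by simp
        also have "\<dots> = cz * u x" using ut x by simp
        finally show "Q u x = cz * u x" .
      qed
    qed
  qed
  then show ?thesis by blast
qed

lemma Jf_in:
  assumes "u \<in> cfgs a S" "x \<in> cfgs a {..<n}" "w < a" "i < n" "R \<subseteq> {..<n}" "S \<subseteq> {..<n}"
  shows "Jf S R i u x w \<in> cfgs a {..<n}"
  using assms unfolding cfgs_def Jf_def by auto

lemma Qf_add: "Qf a S T R i K w (\<lambda>x. u x + u' x) x = Qf a S T R i K w u x + Qf a S T R i K w u' x"
  unfolding Qf_def by (simp add: sum.distrib algebra_simps)

lemma Qf_smul: "Qf a S T R i K w (\<lambda>x. t * u x) x = t * Qf a S T R i K w u x"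
  unfolding Qf_def by (simp add: sum_distrib_left algebra_simps)

lemma Qf_loc:
  assumes "\<forall>y\<in>cfgs a {..<n}. u y = u' y" "x \<in> cfgs a {..<n}" "w < a" "i < n" "R \<subseteq> {..<n}" "S \<subseteq> {..<n}"
  shows "Qf a S T R i K w u x = Qf a S T R i K w u' x"
  unfolding Qf_def using assms Jf_in[OF _ assms(2-6)] by (intro sum.cong) auto



definition Mf :: "nat set \<Rightarrow> nat set \<Rightarrow> nat \<Rightarrow> cfg \<Rightarrow> cfg \<Rightarrow> cfg \<Rightarrow> nat \<Rightarrow> cfg" where
  "Mf S S' i u u' x z = (\<lambda>j. if j \<in> S then u j else if j \<in> S' then u' j else if j = i then z else x j)"

lemma restr_Jf:
  assumes "I \<inter> I' = {i}" "I' \<subseteq> {..<n}"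
  shows "restr I' (Jf (I-{i}) ({..<n}-I) i u x w) = restr I' (x(i:=w))"
  using assms unfolding restr_def Jf_def by (auto simp: fun_eq_iff)

lemma Jf_Jf:
  assumes "I \<inter> I' = {i}" "I \<subseteq> {..<n}" "I' \<subseteq> {..<n}" "x \<in> cfgs a {..<n}" "i < n"
  shows "Jf (I'-{i}) ({..<n}-I') i u' (Jf (I-{i}) ({..<n}-I) i u x w) z = Mf (I-{i}) (I'-{i}) i u u' x z"
  using assms unfolding Mf_def Jf_def cfgs_def by (auto simp: fun_eq_iff)

lemma Mf_swap: "S \<inter> S' = {} \<Longrightarrow> Mf S S' i u u' x z = Mf S' S i u' u x z"
  unfolding Mf_def by (auto simp: fun_eq_iff)

lemma Jf_upd: "i \<notin> R \<Longrightarrow> Jf S R i u (x(i:=w)) w' = Jf S R i u x w'"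
  unfolding Jf_def by (auto simp: fun_eq_iff)

lemma upd_in: "x \<in> cfgs a {..<n} \<Longrightarrow> i < n \<Longrightarrow> w < a \<Longrightarrow> x(i:=w) \<in> cfgs a {..<n}"
  unfolding cfgs_def by auto

lemma half:
  assumes II: "I \<inter> I' = {i}" "I \<subseteq> {..<n}" "I' \<subseteq> {..<n}" "i < n"
    and x: "x \<in> cfgs a {..<n}" and w: "w < a" "w' < a"
    and dL: "\<forall>y\<in>cfgs a {..<n}. Qf a (I'-{i}) I' ({..<n}-I') i L z v y = d * v y"
    and cK: "\<forall>y\<in>cfgs a {..<n}. Qf a (I-{i}) I ({..<n}-I) i K w' v y = c * v y"
  shows "(\<Sum>u\<in>cfgs a (I-{i}). \<Sum>u'\<in>cfgs a (I'-{i}). K (restr I (x(i:=w))) u * L (restr I' (x(i:=w'))) u'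
            * v (Mf (I-{i}) (I'-{i}) i u u' x z)) = d * c * v (x(i:=w))"
proof -
  have inner: "(\<Sum>u'\<in>cfgs a (I'-{i}). L (restr I' (x(i:=w'))) u' * v (Mf (I-{i}) (I'-{i}) i u u' x z))
      = d * v (Jf (I-{i}) ({..<n}-I) i u x w')" if u: "u \<in> cfgs a (I-{i})" for u
  proof -
    have x': "Jf (I-{i}) ({..<n}-I) i u x w' \<in> cfgs a {..<n}"
      using Jf_in[OF u x w(2) II(4), of "{..<n}-I"] II by auto
    show ?thesis using dL[rule_format, OF x'] unfolding Qf_def
      restr_Jf[OF II(1,3)] Jf_Jf[OF II(1,2,3) x II(4)] .
  qed
  have "(\<Sum>u\<in>cfgs a (I-{i}). \<Sum>u'\<in>cfgs a (I'-{i}). K (restr I (x(i:=w))) u * L (restr I' (x(i:=w'))) u'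
            * v (Mf (I-{i}) (I'-{i}) i u u' x z))
     = (\<Sum>u\<in>cfgs a (I-{i}). K (restr I (x(i:=w))) u * (\<Sum>u'\<in>cfgs a (I'-{i}). L (restr I' (x(i:=w'))) u'
            * v (Mf (I-{i}) (I'-{i}) i u u' x z)))"
    by (simp add: sum_distrib_left mult_ac)
  also have "\<dots> = (\<Sum>u\<in>cfgs a (I-{i}). K (restr I (x(i:=w))) u * (d * v (Jf (I-{i}) ({..<n}-I) i u x w')))"
    using inner by (intro sum.cong) auto
  also have "\<dots> = d * Qf a (I-{i}) I ({..<n}-I) i K w' v (x(i:=w))"
  proof -
    have iR: "i \<notin> {..<n}-I" using II(1) by blast
    show ?thesis unfolding Qf_def by (simp add: sum_distrib_left mult_ac Jf_upd[OF iR])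
  qed
  also have "\<dots> = d * c * v (x(i:=w))" using cK upd_in[OF x II(4) w(1)] by simp
  finally show ?thesis .
qed

lemma commute:
  assumes II: "I \<inter> I' = {i}" "I \<subseteq> {..<n}" "I' \<subseteq> {..<n}" "i < n"
    and x: "x \<in> cfgs a {..<n}" and w: "w < a" "w' < a" "z < a"
    and dL: "\<forall>w<a. \<forall>y\<in>cfgs a {..<n}. Qf a (I'-{i}) I' ({..<n}-I') i L w v y = d w * v y"
    and cK: "\<forall>w<a. \<forall>y\<in>cfgs a {..<n}. Qf a (I-{i}) I ({..<n}-I) i K w v y = c w * v y"
  shows "d z * c w' * v (x(i:=w)) = c z * d w * v (x(i:=w'))"
proof -
  have h1: "(\<Sum>u\<in>cfgs a (I-{i}). \<Sum>u'\<in>cfgs a (I'-{i}). K (restr I (x(i:=w))) u * L (restr I' (x(i:=w'))) u'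
            * v (Mf (I-{i}) (I'-{i}) i u u' x z)) = d z * c w' * v (x(i:=w))"
    using half[OF II x w(1,2), of L z v "d z" K "c w'"] dL cK w by blast
  have II': "I' \<inter> I = {i}" using II(1) by blast
  have h2: "(\<Sum>u'\<in>cfgs a (I'-{i}). \<Sum>u\<in>cfgs a (I-{i}). L (restr I' (x(i:=w'))) u' * K (restr I (x(i:=w))) u
            * v (Mf (I'-{i}) (I-{i}) i u' u x z)) = c z * d w * v (x(i:=w'))"
    using half[OF II' II(3,2,4) x w(2,1), of K z v "c z" L "d w"] dL cK w by blast
  have dis: "(I-{i}) \<inter> (I'-{i}) = {}" using II(1) by blast
  have "(\<Sum>u'\<in>cfgs a (I'-{i}). \<Sum>u\<in>cfgs a (I-{i}). L (restr I' (x(i:=w'))) u' * K (restr I (x(i:=w))) u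
            * v (Mf (I'-{i}) (I-{i}) i u' u x z)) =
        (\<Sum>u\<in>cfgs a (I-{i}). \<Sum>u'\<in>cfgs a (I'-{i}). K (restr I (x(i:=w))) u * L (restr I' (x(i:=w'))) u'
            * v (Mf (I-{i}) (I'-{i}) i u u' x z))"
    by (subst sum.swap) (simp add: Mf_swap[OF dis] mult_ac)
  then show ?thesis using h1 h2 by simp
qed



lemma side:
  assumes a: "0 < a" and sub: "is_subspace a n C" and i: "i < n" "i \<in> T" "T \<subseteq> {..<n}"
    and Phi: "\<forall>\<rho>. \<Phi> \<rho> = kraus_apply a (T-{i}) Ks \<rho>"
    and rec: "\<forall>\<psi>\<in>code_states a n C. \<forall>x\<in>cfgs a {..<n}. \<forall>y\<in>cfgs a {..<n}.
           channel_tensor_id (T-{i}) T ({..<n}-T) \<Phi> (reduced a n ({..<n}-{i}) \<psi>) x y = \<psi> x y"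
    and v0: "v0 \<in> C" "x0 \<in> cfgs a {..<n}" "v0 x0 \<noteq> 0"
  shows "\<exists>c. (\<forall>j<length Ks. \<forall>w<a. \<forall>v\<in>C. \<forall>x\<in>cfgs a {..<n}.
              Qf a (T-{i}) T ({..<n}-T) i (Ks!j) w v x = c j w * v x)
           \<and> (\<exists>j<length Ks. \<exists>w<a. c j w \<noteq> 0)"
proof -
  let ?X = "cfgs a {..<n}"
  let ?Q = "\<lambda>j w. Qf a (T-{i}) T ({..<n}-T) i (Ks!j) w"
  have Phi': "\<Phi> = kraus_apply a (T-{i}) Ks" using Phi by auto
  have finX: "finite ?X" by (rule finite_cfgs) simp
  have SR: "T - {i} \<subseteq> {..<n}" "{..<n} - T \<subseteq> {..<n}" using i by auto
  have add: "\<forall>u\<in>C. \<forall>w\<in>C. (\<lambda>x. u x + w x) \<in> C" and smul: "\<forall>t. \<forall>u\<in>C. (\<lambda>x. t * u x) \<in> C"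
    using sub unfolding is_subspace_def by auto
  have R1: "(\<Sum>j<length Ks. \<Sum>w<a. ?Q j w u x * cnj (?Q j w u y)) = u x * cnj (u y)"
    if u: "u \<in> C" "(\<Sum>x\<in>?X. cmod (u x) ^ 2) = 1" and xy: "x \<in> ?X" "y \<in> ?X" for u x y
  proof -
    have "outer u \<in> code_states a n C" unfolding code_states_def using u by blast
    then have "channel_tensor_id (T-{i}) T ({..<n}-T) \<Phi> (reduced a n ({..<n}-{i}) (outer u)) x y = outer u x y"
      using rec xy by blast
    then have "(\<Sum>j<length Ks. \<Sum>w<a. ?Q j w u x * cnj (?Q j w u y)) = outer u x y"
      unfolding Phi' step1[OF i] .
    then show ?thesis by (simp add: outer_def)
  qed
  have norm: "\<exists>s u'. s > 0 \<and> u' \<in> C \<and> (\<Sum>x\<in>?X. cmod (u' x) ^ 2) = 1 \<and> u = (\<lambda>x. complex_of_real s * u' x)"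
    if u: "u \<in> C" "x1 \<in> ?X" "u x1 \<noteq> 0" for u x1
  proof -
    define s where "s = sqrt (\<Sum>x\<in>?X. cmod (u x) ^ 2)"
    have "cmod (u x1) ^ 2 \<le> (\<Sum>x\<in>?X. cmod (u x) ^ 2)"
      using member_le_sum[OF u(2), of "\<lambda>x. cmod (u x) ^ 2"] finX by auto
    moreover have "cmod (u x1) ^ 2 > 0" using u(3) by simp
    ultimately have S: "(\<Sum>x\<in>?X. cmod (u x) ^ 2) > 0" by linarith
    then have s: "s > 0" unfolding s_def by simp
    define u' where "u' = (\<lambda>x. complex_of_real (1/s) * u x)"
    have "u' \<in> C" unfolding u'_def using smul u(1) by blast
    moreover have "(\<Sum>x\<in>?X. cmod (u' x) ^ 2) = 1"
    proof -
      have "(\<Sum>x\<in>?X. cmod (u' x) ^ 2) = (\<Sum>x\<in>?X. cmod (u x) ^ 2) / s ^ 2"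
        unfolding u'_def sum_divide_distrib using s by (intro sum.cong refl) (simp add: norm_divide power_divide)
      also have "s ^ 2 = (\<Sum>x\<in>?X. cmod (u x) ^ 2)" unfolding s_def using S by simp
      finally show ?thesis using S by simp
    qed
    moreover have "u = (\<lambda>x. complex_of_real s * u' x)" unfolding u'_def using s by auto
    ultimately show ?thesis using s by blast
  qed
  have eig: "\<exists>c. \<forall>x\<in>?X. ?Q j w u x = c * u x" if j: "j < length Ks" and w: "w < a" and u: "u \<in> C" for j w u
  proof (cases "\<forall>x\<in>?X. u x = 0")
    case True
    have "?Q j w u x = 0" if x: "x \<in> ?X" for x
    proof -
      have "\<forall>y\<in>?X. u y = (\<lambda>_. 0) y" using True by simp
      from Qf_loc[OF this x w i(1) SR(2,1)]
      have "?Q j w u x = ?Q j w (\<lambda>_. 0) x" .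
      also have "\<dots> = 0" unfolding Qf_def by simp
      finally show ?thesis .
    qed
    then have "\<forall>x\<in>?X. ?Q j w u x = 0 * u x" by simp
    then show ?thesis by blast
  next
    case False
    then obtain x1 where x1: "x1 \<in> ?X" "u x1 \<noteq> 0" by blast
    obtain s u' where su: "s > 0" "u' \<in> C" "(\<Sum>x\<in>?X. cmod (u' x) ^ 2) = 1" "u = (\<lambda>x. complex_of_real s * u' x)"
      using norm[OF u x1] by blast
    have u'x1: "u' x1 \<noteq> 0" using x1(2) su(4) by auto
    have ro: "?Q j w u' x * u' x1 = ?Q j w u' x1 * u' x" if x: "x \<in> ?X" for x
      using rank_one[where V = "\<lambda>j w. ?Q j w u'" and v = u' and X = ?X, OF R1[OF su(2,3)] x1(1) x j w] .
    define c where "c = ?Q j w u' x1 / u' x1"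
    have "?Q j w u x = c * u x" if x: "x \<in> ?X" for x
    proof -
      have "?Q j w u x = complex_of_real s * ?Q j w u' x" unfolding su(4) Qf_smul ..
      also have "?Q j w u' x = c * u' x" using ro[OF x] u'x1 unfolding c_def by (simp add: field_simps)
      finally show ?thesis using su(4) by simp
    qed
    then show ?thesis by blast
  qed
  have const: "\<exists>c. \<forall>u\<in>C. \<forall>x\<in>?X. ?Q j w u x = c * u x" if j: "j < length Ks" and w: "w < a" for j w
  proof (rule eig_const[where X = ?X and Q = "?Q j w" and C = C and vz = v0 and xz = x0])
    show "\<forall>u\<in>C. \<forall>w\<in>C. (\<lambda>x. u x + w x) \<in> C" by (rule add)
    show "?Q j w (\<lambda>x. u x + u' x) x = ?Q j w u x + ?Q j w u' x" for u u' x by (rule Qf_add)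
    show "?Q j w (\<lambda>x. t * u x) x = t * ?Q j w u x" for t u x by (rule Qf_smul)
    show "?Q j w u x = ?Q j w u' x" if "\<forall>y\<in>?X. u y = u' y" "x \<in> ?X" for u u' x
      by (rule Qf_loc[OF that w i(1) SR(2,1)])
    show "\<exists>c. \<forall>x\<in>?X. ?Q j w u x = c * u x" if "u \<in> C" for u by (rule eig[OF j w that])
  qed (use v0 in auto)
  define P where "P j w c = (j < length Ks \<and> w < a \<longrightarrow> (\<forall>u\<in>C. \<forall>x\<in>?X. ?Q j w u x = c * u x))" for j w c
  have "\<forall>j. \<exists>f. \<forall>w. P j w (f w)"
  proof
    fix j show "\<exists>f. \<forall>w. P j w (f w)" by (rule choice) (use const in \<open>auto simp: P_def\<close>)
  qed
  then have "\<exists>c. \<forall>j. \<forall>w. P j w (c j w)" by (rule choice)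
  then obtain c where cP: "\<forall>j. \<forall>w. P j w (c j w)" by blast
  have c: "\<And>j w. j < length Ks \<Longrightarrow> w < a \<Longrightarrow> \<forall>u\<in>C. \<forall>x\<in>?X. ?Q j w u x = c j w * u x"
    using cP unfolding P_def by blast
  have nd: "\<exists>j<length Ks. \<exists>w<a. c j w \<noteq> 0"
  proof (rule ccontr)
    assume "\<not> ?thesis"
    then have z: "\<And>j w. j < length Ks \<Longrightarrow> w < a \<Longrightarrow> c j w = 0" by auto
    obtain s u' where su: "s > 0" "u' \<in> C" "(\<Sum>x\<in>?X. cmod (u' x) ^ 2) = 1" "v0 = (\<lambda>x. complex_of_real s * u' x)"
      using norm[OF v0] by blast
    have "u' x0 \<noteq> 0" using v0(3) su(4) by auto
    moreover have "(\<Sum>j<length Ks. \<Sum>w<a. ?Q j w u' x0 * cnj (?Q j w u' x0)) = 0"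
      using c z su(2) v0(2) by (intro sum.neutral ballI) auto
    ultimately show False using R1[OF su(2,3) v0(2) v0(2)] by simp
  qed
  show ?thesis using c nd by blast
qed



lemma join_restr_ecfg:
  assumes "x \<in> cfgs a {..<n}" "i < n"
  shows "join ({..<n} - {i}) (restr ({..<n} - {i}) x) (ecfg i w) = x(i:=w)"
  using assms unfolding join_def restr_def ecfg_def cfgs_def by (auto simp: fun_eq_iff)

theorem theorem8p1:
  fixes a n k i :: nat and C :: "qvec set" and I :: "nat \<Rightarrow> nat set"
    and Rec :: "nat \<Rightarrow> qop \<Rightarrow> qop"
  assumes "0 < a"
    and "quantum_code a n k C" and "0 < k"
    and "i < n"
    and "I 1 \<subseteq> {..<n}" and "I 2 \<subseteq> {..<n}" and "I 1 \<inter> I 2 = {i}"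
    and "\<forall>b\<in>{1,2}. quantum_channel a (I b - {i}) (I b) (Rec b)"
    and "\<forall>b\<in>{1,2}. \<forall>\<psi>\<in>code_states a n C. \<forall>x\<in>cfgs a {..<n}. \<forall>y\<in>cfgs a {..<n}.
           channel_tensor_id (I b - {i}) (I b) ({..<n} - I b) (Rec b)
             (reduced a n ({..<n} - {i}) \<psi>) x y = \<psi> x y"
  shows "\<exists>\<alpha>. density a {i} \<alpha> \<and>
           (\<forall>\<psi>\<in>code_states a n C. \<forall>x\<in>cfgs a {..<n}. \<forall>y\<in>cfgs a {..<n}.
              \<psi> x y = tensor {i} ({..<n} - {i}) \<alpha> (reduced a n ({..<n} - {i}) \<psi>) x y)"
proof -
  let ?X = "cfgs a {..<n}"
  let ?B = "{..<n} - {i}"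
  have sub: "is_subspace a n C" using assms(2) unfolding quantum_code_def by blast
  have i12: "i \<in> I 1" "i \<in> I 2" using assms(7) by auto
  obtain Ks1 where K1: "\<forall>\<rho>. Rec 1 \<rho> = kraus_apply a (I 1 - {i}) Ks1 \<rho>"
    using assms(8) unfolding quantum_channel_def by auto
  obtain Ks2 where K2: "\<forall>\<rho>. Rec 2 \<rho> = kraus_apply a (I 2 - {i}) Ks2 \<rho>"
    using assms(8) unfolding quantum_channel_def by auto
  have rec1: "\<forall>\<psi>\<in>code_states a n C. \<forall>x\<in>?X. \<forall>y\<in>?X.
           channel_tensor_id (I 1 - {i}) (I 1) ({..<n} - I 1) (Rec 1) (reduced a n ?B \<psi>) x y = \<psi> x y"
    using assms(9) by blast
  have rec2: "\<forall>\<psi>\<in>code_states a n C. \<forall>x\<in>?X. \<forall>y\<in>?X.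
           channel_tensor_id (I 2 - {i}) (I 2) ({..<n} - I 2) (Rec 2) (reduced a n ?B \<psi>) x y = \<psi> x y"
    using assms(9) by blast
  have finX: "finite ?X" by (rule finite_cfgs) simp
  show ?thesis
  proof (cases "\<exists>v\<in>C. \<exists>x\<in>?X. v x \<noteq> 0")
    case False
    define z0 :: cfg where "z0 = (\<lambda>_. 0)"
    have z0: "z0 \<in> cfgs a {i}" using assms(1) unfolding z0_def cfgs_def by auto
    define \<alpha> :: qop where "\<alpha> p q = (if p = z0 then (if q = z0 then 1 else 0) else 0)" for p q
    have empty: "code_states a n C = {}"
    proof -
      have False if "v \<in> C" "(\<Sum>x\<in>?X. cmod (v x) ^ 2) = 1" for v
      proof -
        have "(\<Sum>x\<in>?X. cmod (v x) ^ 2) = 0" using False that(1) by (intro sum.neutral) auto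
        then show False using that(2) by simp
      qed
      then show ?thesis unfolding code_states_def by blast
    qed
    have "density a {i} \<alpha>"
    proof -
      have inner: "(\<Sum>y\<in>cfgs a {i}. cnj (v x) * \<alpha> x y * v y) = (if x = z0 then cnj (v z0) * v z0 else 0)"
        for v :: qvec and x
      proof (cases "x = z0")
        case True
        then have "(\<Sum>y\<in>cfgs a {i}. cnj (v x) * \<alpha> x y * v y) = (\<Sum>y\<in>cfgs a {i}. if y = z0 then cnj (v z0) * v z0 else 0)"
          unfolding \<alpha>_def by (intro sum.cong refl) auto
        also have "\<dots> = cnj (v z0) * v z0" using z0 by (simp only: sum.delta finite_cfgs finite.emptyI finite.insertI) simp
        finally show ?thesis using True by simp
      next
        case False
        then show ?thesis unfolding \<alpha>_def by simp
      qed
      have q: "(\<Sum>x\<in>cfgs a {i}. \<Sum>y\<in>cfgs a {i}. cnj (v x) * \<alpha> x y * v y) = complex_of_real ((cmod (v z0))\<^sup>2)" for v :: qvec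
      proof -
        have "(\<Sum>x\<in>cfgs a {i}. \<Sum>y\<in>cfgs a {i}. cnj (v x) * \<alpha> x y * v y)
            = (\<Sum>x\<in>cfgs a {i}. if x = z0 then cnj (v z0) * v z0 else 0)"
          unfolding inner ..
        also have "\<dots> = cnj (v z0) * v z0" using z0 by (simp only: sum.delta finite_cfgs finite.emptyI finite.insertI) simp
        also have "\<dots> = complex_of_real ((cmod (v z0))\<^sup>2)" by (simp only: complex_norm_square mult.commute)
        finally show ?thesis .
      qed
      have t: "(\<Sum>x\<in>cfgs a {i}. \<alpha> x x) = 1"
      proof -
        have "(\<Sum>x\<in>cfgs a {i}. \<alpha> x x) = (\<Sum>x\<in>cfgs a {i}. if x = z0 then 1 else 0)"
          unfolding \<alpha>_def by (intro sum.cong refl) auto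
        also have "\<dots> = 1" using z0 by (simp only: sum.delta finite_cfgs finite.emptyI finite.insertI) simp
        finally show ?thesis .
      qed
      show ?thesis unfolding density_def Let_def q t by simp
    qed
    then show ?thesis using empty by blast
  next
    case True
    then obtain v0 x0 where v0: "v0 \<in> C" "x0 \<in> ?X" "v0 x0 \<noteq> 0" by blast
    obtain c where c: "\<forall>j<length Ks1. \<forall>w<a. \<forall>v\<in>C. \<forall>x\<in>?X.
              Qf a (I 1-{i}) (I 1) ({..<n}-I 1) i (Ks1!j) w v x = c j w * v x"
        and cnd: "\<exists>j<length Ks1. \<exists>w<a. c j w \<noteq> 0"
      using side[OF assms(1) sub assms(4) i12(1) assms(5) K1 rec1 v0] by blast
    obtain d where d: "\<forall>j<length Ks2. \<forall>w<a. \<forall>v\<in>C. \<forall>x\<in>?X.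
              Qf a (I 2-{i}) (I 2) ({..<n}-I 2) i (Ks2!j) w v x = d j w * v x"
        and dnd: "\<exists>j<length Ks2. \<exists>w<a. d j w \<noteq> 0"
      using side[OF assms(1) sub assms(4) i12(2) assms(6) K2 rec2 v0] by blast
    obtain j1 z0 where j1: "j1 < length Ks1" "z0 < a" "c j1 z0 \<noteq> 0" using cnd by blast
    obtain j2 z1 where j2: "j2 < length Ks2" "z1 < a" "d j2 z1 \<noteq> 0" using dnd by blast
    have comm: "d j2 z1 * c j1 z0 * v (x(i:=w)) = c j1 z1 * d j2 w * v (x(i:=z0))"
      if v: "v \<in> C" and x: "x \<in> ?X" and w: "w < a" for v x w
    proof (rule commute[OF assms(7,5,6,4) x w j1(2) j2(2)])
      show "\<forall>w<a. \<forall>y\<in>?X. Qf a (I 2-{i}) (I 2) ({..<n}-I 2) i (Ks2!j2) w v y = d j2 w * v y"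
        using d j2(1) v by blast
      show "\<forall>w<a. \<forall>y\<in>?X. Qf a (I 1-{i}) (I 1) ({..<n}-I 1) i (Ks1!j1) w v y = c j1 w * v y"
        using c j1(1) v by blast
    qed
    define lam where "lam w = c j1 z1 * d j2 w / (d j2 z1 * c j1 z0)" for w
    have key: "v x = lam (x i) * v (x(i:=z0))" if v: "v \<in> C" and x: "x \<in> ?X" for v x
    proof -
      have xi: "x i < a" using x assms(4) unfolding cfgs_def by auto
      have "d j2 z1 * c j1 z0 * v (x(i:=x i)) = c j1 z1 * d j2 (x i) * v (x(i:=z0))"
        using comm[OF v x xi] .
      then show ?thesis using j1(3) j2(3) unfolding lam_def by (simp add: field_simps)
    qed
    define Nr where "Nr = (\<Sum>w<a. (cmod (lam w))\<^sup>2)"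
    define N where "N = complex_of_real Nr"
    have Nsum: "N = (\<Sum>w<a. lam w * cnj (lam w))" unfolding N_def Nr_def
      by (simp only: of_real_sum complex_norm_square)
    have Npos: "Nr > 0"
    proof -
      have x0i: "x0 i < a" using v0(2) assms(4) unfolding cfgs_def by auto
      have "lam (x0 i) \<noteq> 0" using key[OF v0(1,2)] v0(3) by auto
      then have "(cmod (lam (x0 i)))\<^sup>2 > 0" by simp
      moreover have "(cmod (lam (x0 i)))\<^sup>2 \<le> Nr" unfolding Nr_def
        using member_le_sum[of "x0 i" "{..<a}" "\<lambda>w. (cmod (lam w))\<^sup>2"] x0i by auto
      ultimately show ?thesis by linarith
    qed
    then have N0: "N \<noteq> 0" unfolding N_def by simp
    define \<alpha> :: qop where "\<alpha> p q = lam (p i) * cnj (lam (q i)) / N" for p q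
    have dens: "density a {i} \<alpha>"
    proof -
      have q: "(\<Sum>x\<in>cfgs a {i}. \<Sum>y\<in>cfgs a {i}. cnj (v x) * \<alpha> x y * v y)
          = complex_of_real ((cmod (\<Sum>x\<in>cfgs a {i}. cnj (v x) * lam (x i)))\<^sup>2 / Nr)" for v :: qvec
      proof -
        let ?A = "\<Sum>x\<in>cfgs a {i}. cnj (v x) * lam (x i)"
        have "(\<Sum>x\<in>cfgs a {i}. \<Sum>y\<in>cfgs a {i}. cnj (v x) * \<alpha> x y * v y) = ?A * cnj ?A / N"
          unfolding \<alpha>_def by (simp add: sum_distrib_left sum_distrib_right sum_divide_distrib mult_ac)
        also have "\<dots> = complex_of_real ((cmod ?A)\<^sup>2 / Nr)"
          unfolding N_def by (simp only: of_real_divide complex_norm_square)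
        finally show ?thesis .
      qed
      have t: "(\<Sum>x\<in>cfgs a {i}. \<alpha> x x) = 1"
      proof -
        have "(\<Sum>x\<in>cfgs a {i}. \<alpha> x x) = (\<Sum>w<a. lam w * cnj (lam w)) / N"
          unfolding \<alpha>_def sum_cfgs_single sum_divide_distrib by (simp add: ecfg_def)
        then show ?thesis using Nsum N0 by simp
      qed
      show ?thesis unfolding density_def Let_def q t using Npos by simp
    qed
    have main: "\<psi> x y = tensor {i} ?B \<alpha> (reduced a n ?B \<psi>) x y"
      if psi: "\<psi> \<in> code_states a n C" and x: "x \<in> ?X" and y: "y \<in> ?X" for \<psi> x y
    proof -
      obtain v where v: "\<psi> = outer v" "v \<in> C" using psi unfolding code_states_def by blast
      have D: "{..<n} - ?B = {i}" using assms(4) by auto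
      let ?P = "v (x(i:=z0)) * cnj (v (y(i:=z0)))"
      have "reduced a n ?B \<psi> (restr ?B x) (restr ?B y) = (\<Sum>w<a. v (x(i:=w)) * cnj (v (y(i:=w))))"
        unfolding v reduced_def ptrace_def outer_def D sum_cfgs_single
          join_restr_ecfg[OF x assms(4)] join_restr_ecfg[OF y assms(4)] ..
      also have "\<dots> = (\<Sum>w<a. lam w * cnj (lam w) * ?P)"
      proof (intro sum.cong refl)
        fix w assume "w \<in> {..<a}"
        then have w: "w < a" by simp
        have "v (x(i:=w)) = lam w * v (x(i:=z0))"
          using key[OF v(2) upd_in[OF x assms(4) w]] by simp
        moreover have "v (y(i:=w)) = lam w * v (y(i:=z0))"
          using key[OF v(2) upd_in[OF y assms(4) w]] by simp
        ultimately show "v (x(i:=w)) * cnj (v (y(i:=w))) = lam w * cnj (lam w) * ?P" by simp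
      qed
      also have "\<dots> = N * ?P" unfolding Nsum by (simp add: sum_distrib_right)
      finally have red: "reduced a n ?B \<psi> (restr ?B x) (restr ?B y) = N * ?P" .
      have "\<psi> x y = lam (x i) * cnj (lam (y i)) * ?P"
        unfolding v(1) outer_def using key[OF v(2) x] key[OF v(2) y] by simp
      also have "\<dots> = \<alpha> (restr {i} x) (restr {i} y) * (N * ?P)"
        unfolding \<alpha>_def restr_def using N0 by simp
      finally show ?thesis unfolding tensor_def red .
    qed
    show ?thesis using dens main by blast
  qed
qed


end
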